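(* Let $\mathbb{K}$ be a non-Archimedean valued field, $G$ a normed $\mathbb{K}$-amenable totally disconnected locally compact group, and $E$ a dual normed $\mathbb{K}[G]$-module. Then $H^n_{lucb}(G, E) = 0$ for all $n \geq 1$.
   Context: A non-Archimedean valued field is a field with an absolute value satisfying the ultrametric inequality. A normed $\mathbb{K}$-vector space has a norm with $\|x\|=0$ iff $x=0$, $\|x+y\|\le\max\{\|x\|,\|y\|\}$, $\|\alpha x\|=|\alpha|_\mathbb{K}\|x\|$. A normed $\mathbb{K}[G]$-module is a normed $\mathbb{K}$-vector space with an action of $G$ by linear isometries (no continuity assumed). Duals carry the operator norm $\|T\|_{op}=\inf\{C\ge0:|Tx|_\mathbb{K}\le C\|x\|\}$ and the dual action $(g\cdot\lambda)(x)=\lambda(g^{-1}x)$; a dual normed $\mathbb{K}[G]$-module is one isometrically $G$-isomorphic to the dual of a normed $\mathbb{K}[G]$-module. A map $f:G^{n+1}\to E$ is left uniformly continuous if for every $\varepsilon>0$ there is a neighbourhood $U$ of the identity in $G^{n+1}$ with $\|f(x)-f(ux)\|<\varepsilon$ for all $x\in G^{n+1}$, $u\in U$. $LUC^n_b(G,E)$ is the space of bounded left uniformly continuous maps $G^{n+1}\to E$, with action $(g\cdot f)(g_0,\dots,g_n)=g\cdot f(g^{-1}g_0,\dots,g^{-1}g_n)$ and coboundary $\delta^nf(g_0,\dots,g_{n+1})=\sum_{i=0}^{n+1}(-1)^if(g_0,\dots,\widehat{g_i},\dots,g_{n+1})$; $H^\bullet_{lucb}(G,E)$ is the cohomology of the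 complex of $G$-invariants $LUC^\bullet_b(G,E)^G$. $C_b(G,\mathbb{K})$: continuous bounded functions $G\to\mathbb{K}$ with sup norm, $(g\cdot f)(x)=f(g^{-1}x)$. $G$ is normed $\mathbb{K}$-amenable if there exists a bounded linear map $m:C_b(G,\mathbb{K})\to\mathbb{K}$ with $m(\mathbbm{1}_G)=1$ and $m(g\cdot f)=m(f)$ for all $g,f$. *)

theory Defs
  imports "HOL-Analysis.Analysis" "HOL-Algebra.Group"
begin

definition nonarch_abs :: "('k::field \<Rightarrow> real) \<Rightarrow> bool" where
  "nonarch_abs av \<longleftrightarrow>
     (\<forall>x. 0 \<le> av x) \<and> (\<forall>x. av x = 0 \<longleftrightarrow> x = 0) \<and>
     (\<forall>x y. av (x * y) = av x * av y) \<and>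
     (\<forall>x y. av (x + y) \<le> max (av x) (av y))"

text \<open>The vector space is the whole type 'e, scalar multiplication is sc.\<close>

definition normed_KVS ::
  "('k::field \<Rightarrow> real) \<Rightarrow> ('k \<Rightarrow> 'e::ab_group_add \<Rightarrow> 'e) \<Rightarrow> ('e \<Rightarrow> real) \<Rightarrow> bool" where
  "normed_KVS av sc nm \<longleftrightarrow> vector_space sc \<and>
     (\<forall>x. nm x = 0 \<longleftrightarrow> x = 0) \<and>
     (\<forall>x y. nm (x + y) \<le> max (nm x) (nm y)) \<and>
     (\<forall>a x. nm (sc a x) = av a * nm x)"

text \<open>Action of the group G (HOL-Algebra) by linear isometries; no continuity.\<close>

definition normed_KG_module ::
  "('g, 'm) monoid_scheme \<Rightarrow> ('k::field \<Rightarrow> real) \<Rightarrow> ('k \<Rightarrow> 'e::ab_group_add \<Rightarrow> 'e)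
     \<Rightarrow> ('e \<Rightarrow> real) \<Rightarrow> ('g \<Rightarrow> 'e \<Rightarrow> 'e) \<Rightarrow> bool" where
  "normed_KG_module G av sc nm act \<longleftrightarrow> normed_KVS av sc nm \<and>
     (\<forall>x. act (one G) x = x) \<and>
     (\<forall>g\<in>carrier G. \<forall>h\<in>carrier G. \<forall>x. act (mult G g h) x = act g (act h x)) \<and>
     (\<forall>g\<in>carrier G. \<forall>x y. act g (x + y) = act g x + act g y) \<and>
     (\<forall>g\<in>carrier G. \<forall>a x. act g (sc a x) = sc a (act g x)) \<and>
     (\<forall>g\<in>carrier G. \<forall>x. nm (act g x) = nm x)"

definition K_linear :: "('k::field \<Rightarrow> 'v::ab_group_add \<Rightarrow> 'v) \<Rightarrow> ('v \<Rightarrow> 'k) \<Rightarrow> bool" where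
  "K_linear sc l \<longleftrightarrow> (\<forall>x y. l (x + y) = l x + l y) \<and> (\<forall>a x. l (sc a x) = a * l x)"

definition dual_space ::
  "('k::field \<Rightarrow> real) \<Rightarrow> ('k \<Rightarrow> 'v::ab_group_add \<Rightarrow> 'v) \<Rightarrow> ('v \<Rightarrow> real) \<Rightarrow> ('v \<Rightarrow> 'k) set" where
  "dual_space av sc nm = {l. K_linear sc l \<and> (\<exists>C\<ge>0. \<forall>x. av (l x) \<le> C * nm x)}"

definition op_norm :: "('k \<Rightarrow> real) \<Rightarrow> ('v \<Rightarrow> real) \<Rightarrow> ('v \<Rightarrow> 'k) \<Rightarrow> real" where
  "op_norm av nm l = Inf {C. C \<ge> 0 \<and> (\<forall>x. av (l x) \<le> C * nm x)}"

definition dual_act :: "('g, 'm) monoid_scheme \<Rightarrow> ('g \<Rightarrow> 'v \<Rightarrow> 'v) \<Rightarrow> 'g \<Rightarrow> ('v \<Rightarrow> 'k) \<Rightarrow> ('v \<Rightarrow> 'k)" where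
  "dual_act G act g l = (\<lambda>x. l (act (m_inv G g) x))"

text \<open>E (norm nE, action actE) is a dual normed K[G]-module, witnessed by the normed
  K[G]-module V and an isometric G-equivariant linear isomorphism Phi from E onto V'.\<close>

definition dual_KG_module_via ::
  "('g, 'm) monoid_scheme \<Rightarrow> ('k::field \<Rightarrow> real)
    \<Rightarrow> ('k \<Rightarrow> 'e::ab_group_add \<Rightarrow> 'e) \<Rightarrow> ('e \<Rightarrow> real) \<Rightarrow> ('g \<Rightarrow> 'e \<Rightarrow> 'e)
    \<Rightarrow> ('k \<Rightarrow> 'v::ab_group_add \<Rightarrow> 'v) \<Rightarrow> ('v \<Rightarrow> real) \<Rightarrow> ('g \<Rightarrow> 'v \<Rightarrow> 'v)
    \<Rightarrow> ('e \<Rightarrow> ('v \<Rightarrow> 'k)) \<Rightarrow> bool" where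
  "dual_KG_module_via G av scE nE actE scV nV actV Phi \<longleftrightarrow>
     normed_KG_module G av scE nE actE \<and> normed_KG_module G av scV nV actV \<and>
     bij_betw Phi UNIV (dual_space av scV nV) \<and>
     (\<forall>a b. Phi (a + b) = (\<lambda>x. Phi a x + Phi b x)) \<and>
     (\<forall>c a. Phi (scE c a) = (\<lambda>x. c * Phi a x)) \<and>
     (\<forall>a. nE a = op_norm av nV (Phi a)) \<and>
     (\<forall>g\<in>carrier G. \<forall>a. Phi (actE g a) = dual_act G actV g (Phi a))"

definition totally_disconnected_space :: "'a topology \<Rightarrow> bool" where
  "totally_disconnected_space T \<longleftrightarrow>
     (\<forall>S. S \<subseteq> topspace T \<and> connectedin T S \<longrightarrow> (\<exists>a. S \<subseteq> {a}))"

definition topological_group :: "('g, 'm) monoid_scheme \<Rightarrow> 'g topology \<Rightarrow> bool" where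
  "topological_group G T \<longleftrightarrow> group G \<and> topspace T = carrier G \<and>
     continuous_map (prod_topology T T) T (\<lambda>(x, y). mult G x y) \<and>
     continuous_map T T (m_inv G)"

definition Cb_K :: "('g, 'm) monoid_scheme \<Rightarrow> 'g topology \<Rightarrow> ('k::field \<Rightarrow> real) \<Rightarrow> ('g \<Rightarrow> 'k) set" where
  "Cb_K G T av = {f.
     (\<forall>x\<in>carrier G. \<forall>\<epsilon>>0. \<exists>U. openin T U \<and> x \<in> U \<and> (\<forall>y\<in>U. av (f y - f x) < \<epsilon>)) \<and>
     (\<exists>C. \<forall>x\<in>carrier G. av (f x) \<le> C)}"

definition sup_norm :: "('g, 'm) monoid_scheme \<Rightarrow> ('k \<Rightarrow> real) \<Rightarrow> ('g \<Rightarrow> 'k) \<Rightarrow> real" where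
  "sup_norm G av f = (SUP x\<in>carrier G. av (f x))"

definition normed_K_amenable :: "('g, 'm) monoid_scheme \<Rightarrow> 'g topology \<Rightarrow> ('k::field \<Rightarrow> real) \<Rightarrow> bool" where
  "normed_K_amenable G T av \<longleftrightarrow> (\<exists>m :: ('g \<Rightarrow> 'k) \<Rightarrow> 'k.
     (\<forall>f\<in>Cb_K G T av. \<forall>h\<in>Cb_K G T av. m (\<lambda>x. f x + h x) = m f + m h) \<and>
     (\<forall>c. \<forall>f\<in>Cb_K G T av. m (\<lambda>x. c * f x) = c * m f) \<and>
     (\<exists>C. \<forall>f\<in>Cb_K G T av. av (m f) \<le> C * sup_norm G av f) \<and>
     m (\<lambda>_. 1) = 1 \<and>
     (\<forall>g\<in>carrier G. \<forall>f\<in>Cb_K G T av. m (\<lambda>x. f (mult G (m_inv G g) x)) = m f))"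

text \<open>G^(n+1) is represented as the extensional functions {..n} -> carrier G,
  the topspace of the product topology.\<close>

abbreviation Gpow :: "('g, 'm) monoid_scheme \<Rightarrow> nat \<Rightarrow> (nat \<Rightarrow> 'g) set" where
  "Gpow G n \<equiv> PiE {..n} (\<lambda>_. carrier G)"

definition LUCb ::
  "('g, 'm) monoid_scheme \<Rightarrow> 'g topology \<Rightarrow> ('e::ab_group_add \<Rightarrow> real) \<Rightarrow> nat
     \<Rightarrow> ((nat \<Rightarrow> 'g) \<Rightarrow> 'e) set" where
  "LUCb G T nE n = {f.
     (\<exists>C. \<forall>x\<in>Gpow G n. nE (f x) \<le> C) \<and>
     (\<forall>\<epsilon>>0. \<exists>U. openin (product_topology (\<lambda>_. T) {..n}) U \<and>
          (\<lambda>i\<in>{..n}. one G) \<in> U \<and>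
          (\<forall>x\<in>Gpow G n. \<forall>u\<in>U. nE (f x - f (\<lambda>i\<in>{..n}. mult G (u i) (x i))) < \<epsilon>))}"

definition G_invariant_cochain ::
  "('g, 'm) monoid_scheme \<Rightarrow> ('g \<Rightarrow> 'e \<Rightarrow> 'e) \<Rightarrow> nat \<Rightarrow> ((nat \<Rightarrow> 'g) \<Rightarrow> 'e) \<Rightarrow> bool" where
  "G_invariant_cochain G act n f \<longleftrightarrow>
     (\<forall>g\<in>carrier G. \<forall>x\<in>Gpow G n. act g (f (\<lambda>i\<in>{..n}. mult G (m_inv G g) (x i))) = f x)"

definition delete_coord :: "nat \<Rightarrow> nat \<Rightarrow> (nat \<Rightarrow> 'g) \<Rightarrow> (nat \<Rightarrow> 'g)" where
  "delete_coord n i x = (\<lambda>j\<in>{..n}. if j < i then x j else x (Suc j))"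

definition coboundary :: "nat \<Rightarrow> ((nat \<Rightarrow> 'g) \<Rightarrow> 'e::ab_group_add) \<Rightarrow> (nat \<Rightarrow> 'g) \<Rightarrow> 'e" where
  "coboundary n f x = (\<Sum>i\<in>{..Suc n}.
      (if even i then f (delete_coord n i x) else - f (delete_coord n i x)))"

text \<open>H^n_lucb(G,E) = 0 for n >= 1: every G-invariant bounded LUC n-cocycle is the
  coboundary of a G-invariant bounded LUC (n-1)-cochain (equalities on G^(n+2), G^(n+1)).\<close>

definition lucb_cohomology_vanishes ::
  "('g, 'm) monoid_scheme \<Rightarrow> 'g topology \<Rightarrow> ('e::ab_group_add \<Rightarrow> real) \<Rightarrow> ('g \<Rightarrow> 'e \<Rightarrow> 'e)
     \<Rightarrow> nat \<Rightarrow> bool" where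
  "lucb_cohomology_vanishes G T nE act n \<longleftrightarrow>
     (\<forall>f\<in>LUCb G T nE n. G_invariant_cochain G act n f \<longrightarrow>
        (\<forall>x\<in>Gpow G (Suc n). coboundary n f x = 0) \<longrightarrow>
        (\<exists>h\<in>LUCb G T nE (n - 1). G_invariant_cochain G act (n - 1) h \<and>
           (\<forall>x\<in>Gpow G n. f x = coboundary (n - 1) h x)))"

end

theory Submission
  imports Defs
begin

definition pre :: "nat \<Rightarrow> 'g \<Rightarrow> (nat \<Rightarrow> 'g) \<Rightarrow> (nat \<Rightarrow> 'g)" where
  "pre N k x = (\<lambda>j\<in>{..Suc N}. if j = 0 then k else x (j - 1))"

locale Lset =
  fixes av :: "'k::field \<Rightarrow> real"
    and G :: "('g, 'm) monoid_scheme" and T :: "'g topology"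
    and scE :: "'k \<Rightarrow> 'e::ab_group_add \<Rightarrow> 'e" and nE :: "'e \<Rightarrow> real" and actE :: "'g \<Rightarrow> 'e \<Rightarrow> 'e"
    and scV :: "'k \<Rightarrow> 'v::ab_group_add \<Rightarrow> 'v" and nV :: "'v \<Rightarrow> real" and actV :: "'g \<Rightarrow> 'v \<Rightarrow> 'v"
    and Phi :: "'e \<Rightarrow> 'v \<Rightarrow> 'k"
    and m :: "('g \<Rightarrow> 'k) \<Rightarrow> 'k" and C :: real
  assumes av: "nonarch_abs av"
    and tg: "topological_group G T"
    and dual: "dual_KG_module_via G av scE nE actE scV nV actV Phi"
    and m_add: "\<forall>f\<in>Cb_K G T av. \<forall>h\<in>Cb_K G T av. m (\<lambda>x. f x + h x) = m f + m h"
    and m_scal: "\<forall>c. \<forall>f\<in>Cb_K G T av. m (\<lambda>x. c * f x) = c * m f"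
    and m_bd: "\<forall>f\<in>Cb_K G T av. av (m f) \<le> C * sup_norm G av f"
    and m_one: "m (\<lambda>_. 1) = 1"
    and m_inv: "\<forall>g\<in>carrier G. \<forall>f\<in>Cb_K G T av. m (\<lambda>x. f (mult G (m_inv G g) x)) = m f"
begin

lemma grp: "group G" using tg unfolding topological_group_def by auto
lemma tsp: "topspace T = carrier G" using tg unfolding topological_group_def by auto
lemma contmult: "continuous_map (prod_topology T T) T (\<lambda>(x, y). mult G x y)"
  using tg unfolding topological_group_def by auto

lemma av_nonneg: "0 \<le> av x" using av unfolding nonarch_abs_def by auto
lemma av_0[simp]: "av 0 = 0" using av unfolding nonarch_abs_def by auto
lemma av_mult: "av (x * y) = av x * av y" using av unfolding nonarch_abs_def by auto
lemma av_add: "av (x + y) \<le> max (av x) (av y)" using av unfolding nonarch_abs_def by auto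
lemma av_1[simp]: "av 1 = 1"
proof -
  have "av 1 = av 1 * av 1" using av_mult[of 1 1] by simp
  moreover have "av 1 \<noteq> 0" using av unfolding nonarch_abs_def by auto
  ultimately show ?thesis by simp
qed
lemma av_m1: "av (-1) = 1"
proof -
  have "av (-1) * av (-1) = 1" using av_mult[of "-1" "-1"] by simp
  then have "(av (-1) - 1) * (av (-1) + 1) = 0" by (simp add: algebra_simps)
  moreover have "av (-1) + 1 \<noteq> 0" using av_nonneg[of "-1"] by simp
  ultimately show ?thesis by simp
qed
lemma av_minus[simp]: "av (- x) = av x"
  using av_mult[of "-1" x] av_m1 by simp
lemma av_diff: "av (x - y) \<le> max (av x) (av y)"
  using av_add[of x "-y"] by simp

lemma carrier_ne: "carrier G \<noteq> {}" using group.is_monoid[OF grp] monoid.one_closed by blast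

abbreviation "Cb \<equiv> Cb_K G T av"

lemma openin_sub: "openin T U \<Longrightarrow> U \<subseteq> carrier G"
  using openin_subset tsp by metis

lemma Cb_cong: assumes "f \<in> Cb" "\<forall>x\<in>carrier G. f x = h x" shows "h \<in> Cb"
proof -
  have "\<forall>x\<in>carrier G. \<forall>\<epsilon>>0. \<exists>U. openin T U \<and> x \<in> U \<and> (\<forall>y\<in>U. av (h y - h x) < \<epsilon>)"
  proof (intro ballI allI impI)
    fix x and \<epsilon> :: real assume x: "x \<in> carrier G" and e: "\<epsilon> > 0"
    obtain U where U: "openin T U" "x \<in> U" "\<forall>y\<in>U. av (f y - f x) < \<epsilon>"
      using assms(1) x e unfolding Cb_K_def by blast
    have "\<forall>y\<in>U. av (h y - h x) < \<epsilon>"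
    proof
      fix y assume y: "y \<in> U"
      then have "y \<in> carrier G" using openin_sub[OF U(1)] by auto
      then show "av (h y - h x) < \<epsilon>" using U(3) y assms(2) x by metis
    qed
    then show "\<exists>U. openin T U \<and> x \<in> U \<and> (\<forall>y\<in>U. av (h y - h x) < \<epsilon>)" using U by blast
  qed
  moreover have "\<exists>B. \<forall>x\<in>carrier G. av (h x) \<le> B" using assms unfolding Cb_K_def by auto
  ultimately show ?thesis unfolding Cb_K_def by blast
qed

lemma Cb_const: "(\<lambda>_. c) \<in> Cb"
proof -
  have "openin T (topspace T)" by simp
  then show ?thesis unfolding Cb_K_def using tsp by (auto intro!: exI[of _ "topspace T"])
qed

lemma Cb_diff: assumes "f \<in> Cb" "h \<in> Cb" shows "(\<lambda>x. f x - h x) \<in> Cb"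
proof -
  have "\<forall>x\<in>carrier G. \<forall>\<epsilon>>0. \<exists>U. openin T U \<and> x \<in> U \<and> (\<forall>y\<in>U. av ((f y - h y) - (f x - h x)) < \<epsilon>)"
  proof (intro ballI allI impI)
    fix x and \<epsilon> :: real assume x: "x \<in> carrier G" and e: "\<epsilon> > 0"
    obtain U where U: "openin T U" "x \<in> U" "\<forall>y\<in>U. av (f y - f x) < \<epsilon>"
      using assms(1) x e unfolding Cb_K_def by blast
    obtain V where V: "openin T V" "x \<in> V" "\<forall>y\<in>V. av (h y - h x) < \<epsilon>"
      using assms(2) x e unfolding Cb_K_def by blast
    have "\<forall>y\<in>U \<inter> V. av ((f y - h y) - (f x - h x)) < \<epsilon>"
    proof
      fix y assume "y \<in> U \<inter> V"
      then have "av (f y - f x) < \<epsilon>" "av (h y - h x) < \<epsilon>" using U V by auto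
      then have calc: "av ((f y - f x) - (h y - h x)) < \<epsilon>" using av_diff[of "f y - f x" "h y - h x"] by simp
      have eq: "(f y - h y) - (f x - h x) = (f y - f x) - (h y - h x)" by (simp add: algebra_simps)
      show "av ((f y - h y) - (f x - h x)) < \<epsilon>" using calc by (simp only: eq)
    qed
    then show "\<exists>U. openin T U \<and> x \<in> U \<and> (\<forall>y\<in>U. av ((f y - h y) - (f x - h x)) < \<epsilon>)"
      using U V by (intro exI[of _ "U \<inter> V"]) auto
  qed
  moreover have "\<exists>B. \<forall>x\<in>carrier G. av (f x - h x) \<le> B"
  proof -
    obtain B1 where "\<forall>x\<in>carrier G. av (f x) \<le> B1" using assms(1) unfolding Cb_K_def by auto
    moreover obtain B2 where "\<forall>x\<in>carrier G. av (h x) \<le> B2" using assms(2) unfolding Cb_K_def by auto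
    ultimately have "\<forall>x\<in>carrier G. av (f x - h x) \<le> max B1 B2"
      using order_trans[OF av_diff max.mono] by blast
    then show ?thesis by blast
  qed
  ultimately show ?thesis unfolding Cb_K_def by blast
qed

lemma C_nonneg: "C \<ge> 0"
proof -
  have "sup_norm G av (\<lambda>_. 1) = 1" unfolding sup_norm_def using carrier_ne by simp
  moreover have "av (m (\<lambda>_. 1)) \<le> C * sup_norm G av (\<lambda>_. 1)" using m_bd Cb_const by blast
  ultimately have "1 \<le> C" using m_one by simp
  then show ?thesis by simp
qed

lemma m_diff: assumes "f \<in> Cb" "h \<in> Cb" shows "m (\<lambda>x. f x - h x) = m f - m h"
proof -
  have "m (\<lambda>x. (f x - h x) + h x) = m (\<lambda>x. f x - h x) + m h"
    using m_add[rule_format, OF Cb_diff[OF assms] assms(2)] .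
  then show ?thesis by simp
qed

lemma m_bound: assumes "f \<in> Cb" "\<forall>x\<in>carrier G. av (f x) \<le> B" shows "av (m f) \<le> C * B"
proof -
  have "sup_norm G av f \<le> B" unfolding sup_norm_def using carrier_ne assms(2) by (simp add: cSUP_least)
  then show ?thesis using m_bd assms(1) C_nonneg by (meson mult_left_mono order_trans)
qed

lemma m_cong: assumes "f \<in> Cb" "\<forall>x\<in>carrier G. f x = h x" shows "m f = m h"
proof -
  have h: "h \<in> Cb" using Cb_cong assms by blast
  have "av (m (\<lambda>x. f x - h x)) \<le> C * 0"
    by (rule m_bound) (use Cb_diff[OF assms(1) h] assms(2) in auto)
  then have "av (m (\<lambda>x. f x - h x)) = 0" using av_nonneg[of "m (\<lambda>x. f x - h x)"] by simp
  then have "m (\<lambda>x. f x - h x) = 0" using av unfolding nonarch_abs_def by blast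
  then show ?thesis using m_diff[OF assms(1) h] by simp
qed

lemma m_const: "m (\<lambda>_. c) = c"
proof -
  have "m (\<lambda>x. c * 1) = c * m (\<lambda>_. 1)" using m_scal[rule_format, OF Cb_const[of 1]] .
  then show ?thesis using m_one by simp
qed

lemma Cb_add: assumes "f \<in> Cb" "h \<in> Cb" shows "(\<lambda>x. f x + h x) \<in> Cb"
proof -
  have "(\<lambda>x. 0 - h x) \<in> Cb" using Cb_diff[OF Cb_const assms(2)] .
  from Cb_diff[OF assms(1) this] show ?thesis by simp
qed

lemma m_add': assumes "f \<in> Cb" "h \<in> Cb" shows "m (\<lambda>x. f x + h x) = m f + m h"
  using m_add[rule_format, OF assms] .

lemma m_scal': assumes "f \<in> Cb" shows "m (\<lambda>x. c * f x) = c * m f"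
  using m_scal[rule_format, OF assms] .

lemma modE: "normed_KG_module G av scE nE actE" using dual unfolding dual_KG_module_via_def by auto
lemma modV: "normed_KG_module G av scV nV actV" using dual unfolding dual_KG_module_via_def by auto
lemma vsV: "vector_space scV" using modV unfolding normed_KG_module_def normed_KVS_def by auto
lemma vsE: "vector_space scE" using modE unfolding normed_KG_module_def normed_KVS_def by auto
lemma nV_0iff: "nV x = 0 \<longleftrightarrow> x = 0" using modV unfolding normed_KG_module_def normed_KVS_def by auto
lemma nE_0iff: "nE x = 0 \<longleftrightarrow> x = 0" using modE unfolding normed_KG_module_def normed_KVS_def by auto
lemma nV_add: "nV (x + y) \<le> max (nV x) (nV y)" using modV unfolding normed_KG_module_def normed_KVS_def by auto
lemma nE_add: "nE (x + y) \<le> max (nE x) (nE y)" using modE unfolding normed_KG_module_def normed_KVS_def by auto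
lemma nV_hom: "nV (scV a x) = av a * nV x" using modV unfolding normed_KG_module_def normed_KVS_def by auto
lemma nE_hom: "nE (scE a x) = av a * nE x" using modE unfolding normed_KG_module_def normed_KVS_def by auto

lemma nV_minus: "nV (- x) = nV x"
proof -
  interpret V: vector_space scV by (rule vsV)
  show ?thesis using nV_hom[of "-1" x] V.scale_minus_left[of 1 x] V.scale_one av_m1 by simp
qed
lemma nE_minus: "nE (- x) = nE x"
proof -
  interpret V: vector_space scE by (rule vsE)
  show ?thesis using nE_hom[of "-1" x] V.scale_minus_left[of 1 x] V.scale_one av_m1 by simp
qed
lemma nV_nonneg: "0 \<le> nV x"
proof -
  have "nV (x + - x) \<le> max (nV x) (nV (- x))" by (rule nV_add)
  then show ?thesis using nV_minus nV_0iff[of 0] by simp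
qed
lemma nE_nonneg: "0 \<le> nE x"
proof -
  have "nE (x + - x) \<le> max (nE x) (nE (- x))" by (rule nE_add)
  then show ?thesis using nE_minus nE_0iff[of 0] by simp
qed
lemma nE_diff: "nE (x - y) \<le> max (nE x) (nE y)"
  using nE_add[of x "-y"] nE_minus[of y] by simp
lemma nE_diff_sym: "nE (x - y) = nE (y - x)"
  using nE_minus[of "x - y"] by simp

lemma Phi_dual: "Phi a \<in> dual_space av scV nV"
  using dual unfolding dual_KG_module_via_def bij_betw_def by auto
lemma Phi_add: "Phi (a + b) v = Phi a v + Phi b v"
  using dual unfolding dual_KG_module_via_def by metis
lemma Phi_lin_add: "Phi a (v + w) = Phi a v + Phi a w"
  using Phi_dual[of a] unfolding dual_space_def K_linear_def by auto
lemma Phi_lin_sc: "Phi a (scV c v) = c * Phi a v"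
  using Phi_dual[of a] unfolding dual_space_def K_linear_def by auto
lemma Phi_at0: "Phi a 0 = 0"
proof -
  have "Phi a 0 + 0 = Phi a 0 + Phi a 0" using Phi_lin_add[of a 0 0] by simp
  from add_left_imp_eq[OF this] show ?thesis by simp
qed
lemma Phi_inj: "Phi a = Phi b \<Longrightarrow> a = b"
  using dual unfolding dual_KG_module_via_def bij_betw_def inj_def by auto
lemma Phi_surj: "l \<in> dual_space av scV nV \<Longrightarrow> Phi (inv_into UNIV Phi l) = l"
  using dual unfolding dual_KG_module_via_def bij_betw_def by (auto intro: f_inv_into_f)
lemma Phi_act: "g \<in> carrier G \<Longrightarrow> Phi (actE g a) v = Phi a (actV (m_inv G g) v)"
  using dual unfolding dual_KG_module_via_def dual_act_def by metis
lemma nE_op: "nE a = op_norm av nV (Phi a)"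
  using dual unfolding dual_KG_module_via_def by metis
lemma Phi_0: "Phi 0 v = 0"
proof -
  have "Phi 0 v + 0 = Phi 0 v + Phi 0 v" using Phi_add[of 0 0 v] by simp
  from add_left_imp_eq[OF this] show ?thesis by simp
qed
lemma Phi_minus: "Phi (- a) v = - Phi a v"
  using Phi_add[of a "-a" v] Phi_0[of v] minus_unique[of "Phi a v" "Phi (-a) v"] by simp
lemma Phi_diff: "Phi (a - b) v = Phi a v - Phi b v"
  using Phi_add[of a "-b" v] Phi_minus[of b v] by simp

lemma nE_le: assumes "D \<ge> 0" "\<forall>v. av (Phi a v) \<le> D * nV v" shows "nE a \<le> D"
proof -
  have "op_norm av nV (Phi a) \<le> D" unfolding op_norm_def
    by (rule cInf_lower) (use assms in \<open>auto intro: bdd_belowI[of _ 0]\<close>)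
  then show ?thesis using nE_op by simp
qed

lemma Phi_le: "av (Phi a v) \<le> nE a * nV v"
proof -
  define S where "S = {C. C \<ge> 0 \<and> (\<forall>x. av (Phi a x) \<le> C * nV x)}"
  have ne: "S \<noteq> {}" using Phi_dual[of a] unfolding dual_space_def S_def by auto
  have nEI: "nE a = Inf S" using nE_op unfolding op_norm_def S_def by simp
  have nn: "0 \<le> nE a" unfolding nEI by (rule cInf_greatest[OF ne]) (auto simp: S_def)
  show ?thesis
  proof (cases "nV v = 0")
    case True
    then have "v = 0" using nV_0iff by simp
    then show ?thesis using Phi_at0 nn nV_nonneg by simp
  next
    case False
    then have pos: "nV v > 0" using nV_nonneg[of v] by simp
    have "av (Phi a v) / nV v \<le> Inf S"
    proof (rule cInf_greatest[OF ne])
      fix c assume "c \<in> S"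
      then have "av (Phi a v) \<le> c * nV v" unfolding S_def by auto
      then show "av (Phi a v) / nV v \<le> c" using pos by (simp add: divide_le_eq)
    qed
    then show ?thesis using pos unfolding nEI by (simp add: divide_le_eq)
  qed
qed

definition good :: "('g \<Rightarrow> 'e) \<Rightarrow> bool" where
  "good F \<longleftrightarrow> (\<forall>v. (\<lambda>k. Phi (F k) v) \<in> Cb) \<and> (\<exists>B. \<forall>k\<in>carrier G. nE (F k) \<le> B)"

definition A :: "('g \<Rightarrow> 'e) \<Rightarrow> 'e" where
  "A F = inv_into UNIV Phi (\<lambda>v. m (\<lambda>k. Phi (F k) v))"

lemma A_dual: assumes "good F" shows "(\<lambda>v. m (\<lambda>k. Phi (F k) v)) \<in> dual_space av scV nV"
proof -
  obtain B where B: "\<forall>k\<in>carrier G. nE (F k) \<le> B" using assms unfolding good_def by auto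
  have Cbv: "\<And>v. (\<lambda>k. Phi (F k) v) \<in> Cb" using assms unfolding good_def by auto
  have lin: "K_linear scV (\<lambda>v. m (\<lambda>k. Phi (F k) v))"
    unfolding K_linear_def
  proof (intro conjI allI)
    fix v w
    show "m (\<lambda>k. Phi (F k) (v + w)) = m (\<lambda>k. Phi (F k) v) + m (\<lambda>k. Phi (F k) w)"
      using m_add'[OF Cbv Cbv, of v w] by (simp add: Phi_lin_add)
  next
    fix c v
    show "m (\<lambda>k. Phi (F k) (scV c v)) = c * m (\<lambda>k. Phi (F k) v)"
      using m_scal'[OF Cbv, of c v] by (simp add: Phi_lin_sc)
  qed
  have "\<forall>v. av (m (\<lambda>k. Phi (F k) v)) \<le> (C * max B 0) * nV v"
  proof
    fix v
    have "\<forall>k\<in>carrier G. av (Phi (F k) v) \<le> max B 0 * nV v"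
    proof
      fix k assume "k \<in> carrier G"
      then have "nE (F k) \<le> max B 0" using B by auto
      then have "nE (F k) * nV v \<le> max B 0 * nV v" using nV_nonneg by (simp add: mult_right_mono)
      then show "av (Phi (F k) v) \<le> max B 0 * nV v" using Phi_le[of "F k" v] by linarith
    qed
    from m_bound[OF Cbv this] show "av (m (\<lambda>k. Phi (F k) v)) \<le> (C * max B 0) * nV v" by (simp add: mult.assoc)
  qed
  moreover have "C * max B 0 \<ge> 0" using C_nonneg by simp
  ultimately show ?thesis using lin unfolding dual_space_def by blast
qed

lemma Phi_A: "good F \<Longrightarrow> Phi (A F) v = m (\<lambda>k. Phi (F k) v)"
  unfolding A_def using Phi_surj[OF A_dual] by metis

lemma A_eqI: assumes "good F" "\<And>v. m (\<lambda>k. Phi (F k) v) = Phi a v" shows "A F = a"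
  using Phi_inj[of "A F" a] Phi_A[OF assms(1)] assms(2) by auto

lemma good_cong: assumes "good F" "\<forall>k\<in>carrier G. F k = H k" shows "good H"
proof -
  have "\<And>v. (\<lambda>k. Phi (H k) v) \<in> Cb"
    using Cb_cong[of "\<lambda>k. Phi (F k) v" "\<lambda>k. Phi (H k) v" for v] assms unfolding good_def by auto
  moreover have "\<exists>B. \<forall>k\<in>carrier G. nE (H k) \<le> B" using assms unfolding good_def by auto
  ultimately show ?thesis unfolding good_def by auto
qed

lemma good_const: "good (\<lambda>_. a)"
  unfolding good_def using Cb_const by auto

lemma good_add: assumes "good F" "good H" shows "good (\<lambda>k. F k + H k)"
proof -
  have "\<And>v. (\<lambda>k. Phi (F k + H k) v) \<in> Cb"
    using Cb_add[of "\<lambda>k. Phi (F k) v" "\<lambda>k. Phi (H k) v" for v] assms unfolding good_def by (simp add: Phi_add)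
  moreover have "\<exists>B. \<forall>k\<in>carrier G. nE (F k + H k) \<le> B"
  proof -
    obtain B1 where "\<forall>k\<in>carrier G. nE (F k) \<le> B1" using assms unfolding good_def by auto
    moreover obtain B2 where "\<forall>k\<in>carrier G. nE (H k) \<le> B2" using assms unfolding good_def by auto
    ultimately have "\<forall>k\<in>carrier G. nE (F k + H k) \<le> max B1 B2"
      using order_trans[OF nE_add max.mono] by blast
    then show ?thesis by blast
  qed
  ultimately show ?thesis unfolding good_def by auto
qed

lemma good_minus: assumes "good F" shows "good (\<lambda>k. - F k)"
proof -
  have "\<And>v. (\<lambda>k. Phi (- F k) v) \<in> Cb"
    using Cb_diff[OF Cb_const, of "\<lambda>k. Phi (F k) v" 0 for v] assms unfolding good_def by (simp add: Phi_minus)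
  moreover have "\<exists>B. \<forall>k\<in>carrier G. nE (- F k) \<le> B" using assms unfolding good_def by (simp add: nE_minus)
  ultimately show ?thesis unfolding good_def by auto
qed

lemma A_add: assumes "good F" "good H" shows "A (\<lambda>k. F k + H k) = A F + A H"
proof (rule A_eqI[OF good_add[OF assms]])
  fix v
  have c: "\<And>F v. good F \<Longrightarrow> (\<lambda>k. Phi (F k) v) \<in> Cb" unfolding good_def by auto
  show "m (\<lambda>k. Phi (F k + H k) v) = Phi (A F + A H) v"
    using m_add'[OF c[OF assms(1)] c[OF assms(2)]] by (simp add: Phi_add Phi_A assms)
qed

lemma A_minus: assumes "good F" shows "A (\<lambda>k. - F k) = - A F"
proof (rule A_eqI[OF good_minus[OF assms]])
  fix v
  have c: "(\<lambda>k. Phi (F k) v) \<in> Cb" using assms unfolding good_def by auto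
  show "m (\<lambda>k. Phi (- F k) v) = Phi (- A F) v"
    using m_scal'[OF c, of "-1"] by (simp add: Phi_minus Phi_A assms)
qed

lemma A_const: "A (\<lambda>_. a) = a"
  by (rule A_eqI[OF good_const]) (simp add: m_const)

lemma A_cong: assumes "good F" "\<forall>k\<in>carrier G. F k = H k" shows "A F = A H"
proof -
  have "good H" using good_cong assms by blast
  show ?thesis
  proof (rule A_eqI[OF assms(1)])
    fix v
    have c: "(\<lambda>k. Phi (F k) v) \<in> Cb" using assms unfolding good_def by auto
    show "m (\<lambda>k. Phi (F k) v) = Phi (A H) v"
      using m_cong[OF c] assms(2) Phi_A[OF \<open>good H\<close>] by simp
  qed
qed

lemma A_sum: assumes "finite I" "\<forall>i\<in>I. good (F i)"
  shows "good (\<lambda>k. \<Sum>i\<in>I. F i k) \<and> A (\<lambda>k. \<Sum>i\<in>I. F i k) = (\<Sum>i\<in>I. A (F i))"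
  using assms
proof (induction I rule: finite_induct)
  case empty
  then show ?case using good_const[of 0] A_const[of 0] by simp
next
  case (insert x I)
  then have g: "good (\<lambda>k. \<Sum>i\<in>I. F i k)" and e: "A (\<lambda>k. \<Sum>i\<in>I. F i k) = (\<Sum>i\<in>I. A (F i))"
    and gx: "good (F x)" by auto
  show ?case using good_add[OF gx g] A_add[OF gx g] e insert(1,2) by simp
qed

lemma A_bound: assumes "good F" "\<forall>k\<in>carrier G. nE (F k) \<le> B" shows "nE (A F) \<le> C * B"
proof -
  have B0: "0 \<le> B" using assms(2) carrier_ne nE_nonneg by (meson all_not_in_conv order_trans)
  show ?thesis
  proof (rule nE_le)
    show "0 \<le> C * B" using B0 C_nonneg by simp
    show "\<forall>v. av (Phi (A F) v) \<le> C * B * nV v"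
    proof
      fix v
      have c: "(\<lambda>k. Phi (F k) v) \<in> Cb" using assms unfolding good_def by auto
      have "\<forall>k\<in>carrier G. av (Phi (F k) v) \<le> B * nV v"
      proof
        fix k assume "k \<in> carrier G"
        then have "nE (F k) * nV v \<le> B * nV v" using assms(2) nV_nonneg by (simp add: mult_right_mono)
        then show "av (Phi (F k) v) \<le> B * nV v" using Phi_le[of "F k" v] by linarith
      qed
      from m_bound[OF c this] show "av (Phi (A F) v) \<le> C * B * nV v"
        using Phi_A[OF assms(1)] by (simp add: mult.assoc)
    qed
  qed
qed

lemma good_diff: assumes "good F" "good H" shows "good (\<lambda>k. F k - H k)"
  using good_add[OF assms(1) good_minus[OF assms(2)]] by simp

lemma A_diff: assumes "good F" "good H" shows "A (\<lambda>k. F k - H k) = A F - A H"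
  using A_add[OF assms(1) good_minus[OF assms(2)]] A_minus[OF assms(2)] by simp

lemma cont_rmult: assumes "c \<in> carrier G" shows "continuous_map T T (\<lambda>y. mult G y c)"
proof -
  have "continuous_map T (prod_topology T T) (\<lambda>y. (y, c))"
    by (rule continuous_map_pairedI) (use assms tsp in auto)
  from continuous_map_compose[OF this contmult] show ?thesis by (simp add: o_def)
qed

lemma pre_in: assumes "x \<in> Gpow G N" "k \<in> carrier G" shows "pre N k x \<in> Gpow G (Suc N)"
  using assms unfolding pre_def by (auto simp: PiE_iff)

context
  fixes f :: "(nat \<Rightarrow> 'g) \<Rightarrow> 'e" and N :: nat
  assumes fL: "f \<in> LUCb G T nE (Suc N)"
begin

lemma f_bound: obtains Bf where "Bf \<ge> 0" "\<forall>z\<in>Gpow G (Suc N). nE (f z) \<le> Bf"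
proof -
  obtain B where "\<forall>z\<in>Gpow G (Suc N). nE (f z) \<le> B" using fL unfolding LUCb_def by auto
  then have "\<forall>z\<in>Gpow G (Suc N). nE (f z) \<le> max B 0" by (meson max.coboundedI1)
  then show ?thesis using that[of "max B 0"] by simp
qed

lemma f_luc: assumes "\<epsilon> > 0"
  obtains U where "openin (product_topology (\<lambda>_. T) {..Suc N}) U" "(\<lambda>i\<in>{..Suc N}. one G) \<in> U"
    "\<forall>x\<in>Gpow G (Suc N). \<forall>u\<in>U. nE (f x - f (\<lambda>i\<in>{..Suc N}. mult G (u i) (x i))) < \<epsilon>"
  using fL assms unfolding LUCb_def by blast

lemma phi_Cb: assumes x: "x \<in> Gpow G N" shows "(\<lambda>k. Phi (f (pre N k x)) v) \<in> Cb"
proof -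
  interpret group G by (rule grp)
  obtain Bf where Bf: "Bf \<ge> 0" "\<forall>z\<in>Gpow G (Suc N). nE (f z) \<le> Bf" by (rule f_bound)
  have bd: "\<exists>B. \<forall>k\<in>carrier G. av (Phi (f (pre N k x)) v) \<le> B"
  proof (intro exI ballI)
    fix k assume "k \<in> carrier G"
    then have "nE (f (pre N k x)) \<le> Bf" using Bf pre_in[OF x] by auto
    then have "nE (f (pre N k x)) * nV v \<le> Bf * nV v" using nV_nonneg by (simp add: mult_right_mono)
    then show "av (Phi (f (pre N k x)) v) \<le> Bf * nV v" using Phi_le[of "f (pre N k x)" v] by linarith
  qed
  have ct: "\<forall>k0\<in>carrier G. \<forall>\<epsilon>>0. \<exists>U. openin T U \<and> k0 \<in> U \<and>
      (\<forall>y\<in>U. av (Phi (f (pre N y x)) v - Phi (f (pre N k0 x)) v) < \<epsilon>)"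
  proof (intro ballI allI impI)
    fix k0 and \<epsilon> :: real assume k0: "k0 \<in> carrier G" and e: "\<epsilon> > 0"
    define c where "c = \<epsilon> / (nV v + 1)"
    have c0: "c > 0" unfolding c_def using e nV_nonneg[of v] by simp
    have cn: "c * nV v < \<epsilon>"
    proof -
      have "c * nV v = \<epsilon> * (nV v / (nV v + 1))" unfolding c_def by simp
      also have "\<dots> < \<epsilon> * 1" using e nV_nonneg[of v] by (intro mult_strict_left_mono) auto
      finally show ?thesis by simp
    qed
    obtain U where U: "openin (product_topology (\<lambda>_. T) {..Suc N}) U" "(\<lambda>i\<in>{..Suc N}. one G) \<in> U"
      "\<forall>z\<in>Gpow G (Suc N). \<forall>u\<in>U. nE (f z - f (\<lambda>i\<in>{..Suc N}. mult G (u i) (z i))) < c"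
      using f_luc[OF c0] by blast
    define \<tau> where "\<tau> y = (\<lambda>i\<in>{..Suc N}. if i = 0 then mult G y (m_inv G k0) else one G)" for y
    have cont: "continuous_map T (product_topology (\<lambda>_. T) {..Suc N}) \<tau>"
      unfolding continuous_map_componentwise
    proof (intro conjI ballI)
      show "\<tau> ` topspace T \<subseteq> extensional {..Suc N}" unfolding \<tau>_def by auto
    next
      fix i assume "i \<in> {..Suc N}"
      then have eq: "(\<lambda>y. \<tau> y i) = (if i = 0 then (\<lambda>y. mult G y (m_inv G k0)) else (\<lambda>y. one G))"
        unfolding \<tau>_def by auto
      show "continuous_map T T (\<lambda>y. \<tau> y i)"
        unfolding eq using cont_rmult[of "m_inv G k0"] k0 tsp by auto
    qed
    define W where "W = {y \<in> topspace T. \<tau> y \<in> U}"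
    have W: "openin T W" unfolding W_def by (rule openin_continuous_map_preimage[OF cont U(1)])
    have "\<tau> k0 = (\<lambda>i\<in>{..Suc N}. one G)" unfolding \<tau>_def using k0 by (auto simp: fun_eq_iff)
    then have k0W: "k0 \<in> W" unfolding W_def using k0 tsp U(2) by auto
    have "\<forall>y\<in>W. av (Phi (f (pre N y x)) v - Phi (f (pre N k0 x)) v) < \<epsilon>"
    proof
      fix y assume yW: "y \<in> W"
      then have y: "y \<in> carrier G" and yU: "\<tau> y \<in> U" unfolding W_def using tsp by auto
      have eq: "(\<lambda>i\<in>{..Suc N}. mult G (\<tau> y i) (pre N k0 x i)) = pre N y x"
      proof (rule ext)
        fix i show "(\<lambda>i\<in>{..Suc N}. mult G (\<tau> y i) (pre N k0 x i)) i = pre N y x i"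
        proof (cases "i \<in> {..Suc N}")
          case True
          show ?thesis
          proof (cases "i = 0")
            case True
            then show ?thesis unfolding \<tau>_def pre_def using y k0 by (simp add: m_assoc)
          next
            case False
            then have "x (i - 1) \<in> carrier G" using x \<open>i \<in> {..Suc N}\<close> by (auto simp: PiE_iff)
            then show ?thesis unfolding \<tau>_def pre_def using False \<open>i \<in> {..Suc N}\<close> by simp
          qed
        next
          case False
          then show ?thesis unfolding pre_def by simp
        qed
      qed
      have "nE (f (pre N k0 x) - f (pre N y x)) < c"
        using U(3) pre_in[OF x k0] yU eq by metis
      then have lt: "nE (f (pre N y x) - f (pre N k0 x)) < c" using nE_diff_sym by metis
      have "av (Phi (f (pre N y x)) v - Phi (f (pre N k0 x)) v) = av (Phi (f (pre N y x) - f (pre N k0 x)) v)"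
        by (simp add: Phi_diff)
      also have "\<dots> \<le> nE (f (pre N y x) - f (pre N k0 x)) * nV v" by (rule Phi_le)
      also have "\<dots> \<le> c * nV v" using lt nV_nonneg by (simp add: mult_right_mono)
      finally show "av (Phi (f (pre N y x)) v - Phi (f (pre N k0 x)) v) < \<epsilon>" using cn by simp
    qed
    then show "\<exists>U. openin T U \<and> k0 \<in> U \<and> (\<forall>y\<in>U. av (Phi (f (pre N y x)) v - Phi (f (pre N k0 x)) v) < \<epsilon>)"
      using W k0W by blast
  qed
  show ?thesis unfolding Cb_K_def using ct bd by blast
qed

lemma good_F: assumes x: "x \<in> Gpow G N" shows "good (\<lambda>k. f (pre N k x))"
proof -
  obtain Bf where Bf: "Bf \<ge> 0" "\<forall>z\<in>Gpow G (Suc N). nE (f z) \<le> Bf" by (rule f_bound)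
  then have "\<forall>k\<in>carrier G. nE (f (pre N k x)) \<le> Bf" using pre_in[OF x] by auto
  then show ?thesis unfolding good_def using phi_Cb[OF x] by blast
qed

end

context
  fixes f :: "(nat \<Rightarrow> 'g) \<Rightarrow> 'e" and N :: nat
  assumes fL: "f \<in> LUCb G T nE (Suc N)"
    and finv: "G_invariant_cochain G actE (Suc N) f"
    and fcoc: "\<forall>x\<in>Gpow G (Suc (Suc N)). coboundary (Suc N) f x = 0"
begin

lemma h_LUCb: "(\<lambda>x. A (\<lambda>k. f (pre N k x))) \<in> LUCb G T nE N"
proof -
  interpret group G by (rule grp)
  obtain Bf where Bf: "Bf \<ge> 0" "\<forall>z\<in>Gpow G (Suc N). nE (f z) \<le> Bf" by (rule f_bound[OF fL])
  have bd: "\<forall>x\<in>Gpow G N. nE (A (\<lambda>k. f (pre N k x))) \<le> C * Bf"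
  proof
    fix x assume x: "x \<in> Gpow G N"
    then have "\<forall>k\<in>carrier G. nE (f (pre N k x)) \<le> Bf" using Bf pre_in by auto
    then show "nE (A (\<lambda>k. f (pre N k x))) \<le> C * Bf" using A_bound good_F[OF fL x] by blast
  qed
  have luc: "\<forall>\<epsilon>>0. \<exists>U. openin (product_topology (\<lambda>_. T) {..N}) U \<and> (\<lambda>i\<in>{..N}. one G) \<in> U \<and>
     (\<forall>x\<in>Gpow G N. \<forall>u\<in>U. nE (A (\<lambda>k. f (pre N k x)) - A (\<lambda>k. f (pre N k (\<lambda>i\<in>{..N}. mult G (u i) (x i))))) < \<epsilon>)"
  proof (intro allI impI)
    fix \<epsilon> :: real assume e: "\<epsilon> > 0"
    define c where "c = \<epsilon> / (C + 1)"
    have c0: "c > 0" unfolding c_def using e C_nonneg by simp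
    have cn: "C * c < \<epsilon>"
    proof -
      have "C * c = \<epsilon> * (C / (C + 1))" unfolding c_def by simp
      also have "\<dots> < \<epsilon> * 1" using e C_nonneg by (intro mult_strict_left_mono) auto
      finally show ?thesis by simp
    qed
    obtain U where U: "openin (product_topology (\<lambda>_. T) {..Suc N}) U" "(\<lambda>i\<in>{..Suc N}. one G) \<in> U"
      "\<forall>z\<in>Gpow G (Suc N). \<forall>u\<in>U. nE (f z - f (\<lambda>i\<in>{..Suc N}. mult G (u i) (z i))) < c"
      using f_luc[OF fL c0] by blast
    define \<sigma> where "\<sigma> u = (\<lambda>i\<in>{..Suc N}. if i = 0 then one G else u (i - 1))" for u :: "nat \<Rightarrow> 'g"
    have cont: "continuous_map (product_topology (\<lambda>_. T) {..N}) (product_topology (\<lambda>_. T) {..Suc N}) \<sigma>"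
      unfolding continuous_map_componentwise
    proof (intro conjI ballI)
      show "\<sigma> ` topspace (product_topology (\<lambda>_. T) {..N}) \<subseteq> extensional {..Suc N}" unfolding \<sigma>_def by auto
    next
      fix i assume i: "i \<in> {..Suc N}"
      show "continuous_map (product_topology (\<lambda>_. T) {..N}) T (\<lambda>u. \<sigma> u i)"
      proof (cases "i = 0")
        case True
        then have eq: "(\<lambda>u. \<sigma> u i) = (\<lambda>u. one G)" unfolding \<sigma>_def by auto
        show ?thesis unfolding eq using tsp by simp
      next
        case False
        then have eq: "(\<lambda>u. \<sigma> u i) = (\<lambda>u. u (i - 1))" unfolding \<sigma>_def using i by auto
        have "i - 1 \<in> {..N}" using i False by auto
        then show ?thesis unfolding eq by (rule continuous_map_product_projection)
      qed
    qed
    define W where "W = {u \<in> topspace (product_topology (\<lambda>_. T) {..N}). \<sigma> u \<in> U}"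
    have W: "openin (product_topology (\<lambda>_. T) {..N}) W"
      unfolding W_def by (rule openin_continuous_map_preimage[OF cont U(1)])
    have "\<sigma> (\<lambda>i\<in>{..N}. one G) = (\<lambda>i\<in>{..Suc N}. one G)" unfolding \<sigma>_def by (auto simp: fun_eq_iff)
    then have oneW: "(\<lambda>i\<in>{..N}. one G) \<in> W" unfolding W_def using tsp U(2) by auto
    have "\<forall>x\<in>Gpow G N. \<forall>u\<in>W. nE (A (\<lambda>k. f (pre N k x)) - A (\<lambda>k. f (pre N k (\<lambda>i\<in>{..N}. mult G (u i) (x i))))) < \<epsilon>"
    proof (intro ballI)
      fix x u assume x: "x \<in> Gpow G N" and uW: "u \<in> W"
      then have u: "u \<in> Gpow G N" and uU: "\<sigma> u \<in> U" unfolding W_def using tsp by auto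
      define ux where "ux = (\<lambda>i\<in>{..N}. mult G (u i) (x i))"
      have ux: "ux \<in> Gpow G N" unfolding ux_def using x u by (auto simp: PiE_iff)
      have diff: "\<forall>k\<in>carrier G. nE (f (pre N k x) - f (pre N k ux)) \<le> c"
      proof
        fix k assume k: "k \<in> carrier G"
        have eq: "(\<lambda>i\<in>{..Suc N}. mult G (\<sigma> u i) (pre N k x i)) = pre N k ux"
        proof (rule ext)
          fix i show "(\<lambda>i\<in>{..Suc N}. mult G (\<sigma> u i) (pre N k x i)) i = pre N k ux i"
          proof (cases "i \<in> {..Suc N}")
            case True
            show ?thesis
            proof (cases "i = 0")
              case True
              then show ?thesis unfolding \<sigma>_def pre_def using k by simp
            next
              case False
              then have "i - 1 \<in> {..N}" using \<open>i \<in> {..Suc N}\<close> by auto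
              then show ?thesis unfolding \<sigma>_def pre_def ux_def using False \<open>i \<in> {..Suc N}\<close> by simp
            qed
          next
            case False
            then show ?thesis unfolding pre_def by simp
          qed
        qed
        show "nE (f (pre N k x) - f (pre N k ux)) \<le> c"
          using U(3) pre_in[OF x k] uU eq by (metis less_imp_le)
      qed
      have "A (\<lambda>k. f (pre N k x)) - A (\<lambda>k. f (pre N k ux)) = A (\<lambda>k. f (pre N k x) - f (pre N k ux))"
        using A_diff[OF good_F[OF fL x] good_F[OF fL ux]] by simp
      also have "nE \<dots> \<le> C * c"
        by (rule A_bound[OF good_diff[OF good_F[OF fL x] good_F[OF fL ux]] diff])
      finally show "nE (A (\<lambda>k. f (pre N k x)) - A (\<lambda>k. f (pre N k (\<lambda>i\<in>{..N}. mult G (u i) (x i))))) < \<epsilon>"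
        using cn unfolding ux_def by simp
    qed
    then show "\<exists>U. openin (product_topology (\<lambda>_. T) {..N}) U \<and> (\<lambda>i\<in>{..N}. one G) \<in> U \<and>
     (\<forall>x\<in>Gpow G N. \<forall>u\<in>U. nE (A (\<lambda>k. f (pre N k x)) - A (\<lambda>k. f (pre N k (\<lambda>i\<in>{..N}. mult G (u i) (x i))))) < \<epsilon>)"
      using W oneW by blast
  qed
  show ?thesis unfolding LUCb_def using bd luc by blast
qed

lemma h_inv: "G_invariant_cochain G actE N (\<lambda>x. A (\<lambda>k. f (pre N k x)))"
  unfolding G_invariant_cochain_def
proof (intro ballI)
  interpret group G by (rule grp)
  fix g x assume g: "g \<in> carrier G" and x: "x \<in> Gpow G N"
  define y where "y = (\<lambda>i\<in>{..N}. mult G (m_inv G g) (x i))"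
  have y: "y \<in> Gpow G N" unfolding y_def using x g by (auto simp: PiE_iff)
  have key: "actE g (f (pre N k y)) = f (pre N (mult G g k) x)" if k: "k \<in> carrier G" for k
  proof -
    have z: "pre N (mult G g k) x \<in> Gpow G (Suc N)" using pre_in[OF x] g k by simp
    have eq: "(\<lambda>i\<in>{..Suc N}. mult G (m_inv G g) (pre N (mult G g k) x i)) = pre N k y"
    proof (rule ext)
      fix i show "(\<lambda>i\<in>{..Suc N}. mult G (m_inv G g) (pre N (mult G g k) x i)) i = pre N k y i"
      proof (cases "i \<in> {..Suc N}")
        case True
        show ?thesis
        proof (cases "i = 0")
          case True
          then show ?thesis unfolding pre_def using k g by (simp add: m_assoc[symmetric])
        next
          case False
          then have "i - 1 \<in> {..N}" using \<open>i \<in> {..Suc N}\<close> by auto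
          then show ?thesis unfolding pre_def y_def using False \<open>i \<in> {..Suc N}\<close> by simp
        qed
      next
        case False
        then show ?thesis unfolding pre_def by simp
      qed
    qed
    show ?thesis using finv z g eq unfolding G_invariant_cochain_def by metis
  qed
  show "actE g (A (\<lambda>k. f (pre N k (\<lambda>i\<in>{..N}. mult G (m_inv G g) (x i))))) = A (\<lambda>k. f (pre N k x))"
    unfolding y_def[symmetric]
  proof (rule Phi_inj, rule ext)
    fix v
    define \<phi> where "\<phi> = (\<lambda>k. Phi (f (pre N k x)) v)"
    have phi: "\<phi> \<in> Cb" unfolding \<phi>_def by (rule phi_Cb[OF fL x])
    have psi: "(\<lambda>k. Phi (f (pre N k y)) (actV (m_inv G g) v)) \<in> Cb" by (rule phi_Cb[OF fL y])
    have "Phi (actE g (A (\<lambda>k. f (pre N k y)))) v = m (\<lambda>k. Phi (f (pre N k y)) (actV (m_inv G g) v))"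
      using Phi_act[OF g] Phi_A[OF good_F[OF fL y]] by simp
    also have "\<dots> = m (\<lambda>k. \<phi> (mult G (m_inv G (m_inv G g)) k))"
    proof (rule m_cong[OF psi], rule ballI)
      fix k assume k: "k \<in> carrier G"
      have "Phi (f (pre N k y)) (actV (m_inv G g) v) = Phi (actE g (f (pre N k y))) v"
        using Phi_act[OF g] by simp
      also have "\<dots> = \<phi> (mult G g k)" unfolding \<phi>_def using key[OF k] by simp
      finally show "Phi (f (pre N k y)) (actV (m_inv G g) v) = \<phi> (mult G (m_inv G (m_inv G g)) k)"
        using g by simp
    qed
    also have "\<dots> = m \<phi>" by (rule m_inv[rule_format, OF inv_closed[OF g] phi])
    also have "\<dots> = Phi (A (\<lambda>k. f (pre N k x))) v"
      unfolding \<phi>_def using Phi_A[OF good_F[OF fL x]] by simp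
    finally show "Phi (actE g (A (\<lambda>k. f (pre N k y)))) v = Phi (A (\<lambda>k. f (pre N k x))) v" .
  qed
qed

lemma dc_in: assumes "x \<in> Gpow G (Suc N)" "j \<le> Suc N" shows "delete_coord N j x \<in> Gpow G N"
  using assms unfolding delete_coord_def by (auto simp: PiE_iff)

lemma dc0: assumes "x \<in> Gpow G (Suc N)" shows "delete_coord (Suc N) 0 (pre (Suc N) k x) = x"
proof (rule ext)
  fix l show "delete_coord (Suc N) 0 (pre (Suc N) k x) l = x l"
  proof (cases "l \<in> {..Suc N}")
    case True then show ?thesis unfolding delete_coord_def pre_def by simp
  next
    case False then show ?thesis unfolding delete_coord_def using PiE_arb[OF assms False] by simp
  qed
qed

lemma dcS: "delete_coord (Suc N) (Suc j) (pre (Suc N) k x) = pre N k (delete_coord N j x)"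
proof (rule ext)
  fix l show "delete_coord (Suc N) (Suc j) (pre (Suc N) k x) l = pre N k (delete_coord N j x) l"
  proof (cases "l \<in> {..Suc N}")
    case True
    show ?thesis
    proof (cases "l = 0")
      case True then show ?thesis unfolding delete_coord_def pre_def by simp
    next
      case False
      then have "l - 1 \<in> {..N}" using \<open>l \<in> {..Suc N}\<close> by auto
      then show ?thesis unfolding delete_coord_def pre_def using False \<open>l \<in> {..Suc N}\<close>
        by (auto simp: Suc_le_eq)
    qed
  next
    case False then show ?thesis unfolding delete_coord_def pre_def by simp
  qed
qed

lemma cocyc: assumes x: "x \<in> Gpow G (Suc N)" and k: "k \<in> carrier G"
  shows "f x = (\<Sum>j\<le>Suc N. if even j then f (pre N k (delete_coord N j x)) else - f (pre N k (delete_coord N j x)))"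
    (is "_ = ?S")
proof -
  define P where "P j = f (pre N k (delete_coord N j x))" for j
  have z: "pre (Suc N) k x \<in> Gpow G (Suc (Suc N))" by (rule pre_in[OF x k])
  have "0 = coboundary (Suc N) f (pre (Suc N) k x)" using fcoc z by simp
  also have "\<dots> = f x + (\<Sum>j\<le>Suc N. if even (Suc j) then P j else - P j)"
    unfolding coboundary_def P_def by (subst sum.atMost_Suc_shift) (simp only: dc0[OF x] dcS dvd_0_right if_True)
  also have "(\<Sum>j\<le>Suc N. if even (Suc j) then P j else - P j) = - ?S"
    unfolding sum_negf[symmetric] P_def by (rule sum.cong) auto
  finally have "0 = f x + - ?S" .
  then show ?thesis by (metis diff_conv_add_uminus right_minus_eq)
qed

lemma h_cob: assumes x: "x \<in> Gpow G (Suc N)"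
  shows "f x = coboundary N (\<lambda>x. A (\<lambda>k. f (pre N k x))) x"
proof -
  define P where "P j k = f (pre N k (delete_coord N j x))" for j k
  define H where "H j k = (if even j then P j k else - P j k)" for j k
  have gP: "good (P j)" if "j \<le> Suc N" for j
    unfolding P_def by (rule good_F[OF fL dc_in[OF x that]])
  have gH: "good (H j)" if "j \<le> Suc N" for j
  proof (cases "even j")
    case True
    then have "H j = P j" unfolding H_def by auto
    then show ?thesis using gP[OF that] by simp
  next
    case False
    then have "H j = (\<lambda>k. - P j k)" unfolding H_def by auto
    then show ?thesis using good_minus[OF gP[OF that]] by simp
  qed
  have "coboundary N (\<lambda>x. A (\<lambda>k. f (pre N k x))) x = (\<Sum>j\<le>Suc N. if even j then A (P j) else - A (P j))"
    unfolding coboundary_def P_def by simp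
  also have "\<dots> = (\<Sum>j\<le>Suc N. A (H j))"
  proof (rule sum.cong)
    fix j assume j: "j \<in> {..Suc N}"
    show "(if even j then A (P j) else - A (P j)) = A (H j)"
    proof (cases "even j")
      case True
      then have "H j = P j" unfolding H_def by auto
      then show ?thesis using True by simp
    next
      case False
      then have "H j = (\<lambda>k. - P j k)" unfolding H_def by auto
      then show ?thesis using False A_minus[OF gP] j by simp
    qed
  qed simp
  also have "\<dots> = A (\<lambda>k. \<Sum>j\<le>Suc N. H j k)" using A_sum[of "{..Suc N}" H] gH by simp
  also have "\<dots> = A (\<lambda>k. f x)"
  proof (rule A_cong)
    show "good (\<lambda>k. \<Sum>j\<le>Suc N. H j k)" using A_sum[of "{..Suc N}" H] gH by simp
    show "\<forall>k\<in>carrier G. (\<Sum>j\<le>Suc N. H j k) = f x"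
      using cocyc[OF x] unfolding H_def P_def by simp
  qed
  also have "\<dots> = f x" by (rule A_const)
  finally show ?thesis by simp
qed

end

end

theorem theorem7p4:
  fixes av :: "'k::field \<Rightarrow> real"
    and G :: "('g, 'm) monoid_scheme" and T :: "'g topology"
    and scE :: "'k \<Rightarrow> 'e::ab_group_add \<Rightarrow> 'e" and nE :: "'e \<Rightarrow> real" and actE :: "'g \<Rightarrow> 'e \<Rightarrow> 'e"
    and scV :: "'k \<Rightarrow> 'v::ab_group_add \<Rightarrow> 'v" and nV :: "'v \<Rightarrow> real" and actV :: "'g \<Rightarrow> 'v \<Rightarrow> 'v"
    and Phi :: "'e \<Rightarrow> 'v \<Rightarrow> 'k"
    and n :: nat
  assumes "nonarch_abs av"
    and "topological_group G T"
    and "locally_compact_space T"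
    and "totally_disconnected_space T"
    and "normed_K_amenable G T av"
    and "dual_KG_module_via G av scE nE actE scV nV actV Phi"
    and "n \<ge> 1"
  shows "lucb_cohomology_vanishes G T nE actE n"
proof -
  obtain m :: "('g \<Rightarrow> 'k) \<Rightarrow> 'k" and C where
    m1: "\<forall>f\<in>Cb_K G T av. \<forall>h\<in>Cb_K G T av. m (\<lambda>x. f x + h x) = m f + m h" and
    m2: "\<forall>c. \<forall>f\<in>Cb_K G T av. m (\<lambda>x. c * f x) = c * m f" and
    m3: "\<forall>f\<in>Cb_K G T av. av (m f) \<le> C * sup_norm G av f" and
    m4: "m (\<lambda>_. 1) = 1" and
    m5: "\<forall>g\<in>carrier G. \<forall>f\<in>Cb_K G T av. m (\<lambda>x. f (mult G (m_inv G g) x)) = m f"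
    using assms(5) unfolding normed_K_amenable_def by blast
  interpret L: Lset av G T scE nE actE scV nV actV Phi m C
    by (unfold_locales; fact assms(1) assms(2) assms(6) m1 m2 m3 m4 m5)
  obtain N where n: "n = Suc N" using assms(7) by (cases n) auto
  show ?thesis unfolding lucb_cohomology_vanishes_def n
  proof (intro ballI impI)
    fix f assume fL: "f \<in> LUCb G T nE (Suc N)" and finv: "G_invariant_cochain G actE (Suc N) f"
      and fcoc: "\<forall>x\<in>Gpow G (Suc (Suc N)). coboundary (Suc N) f x = 0"
    show "\<exists>h\<in>LUCb G T nE (Suc N - 1). G_invariant_cochain G actE (Suc N - 1) h \<and>
           (\<forall>x\<in>Gpow G (Suc N). f x = coboundary (Suc N - 1) h x)"
      using L.h_LUCb[OF fL finv fcoc] L.h_inv[OF fL finv fcoc] L.h_cob[OF fL finv fcoc]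
      by (intro bexI[of _ "\<lambda>x. L.A (\<lambda>k. f (pre N k x))"]) auto
  qed
qed

end
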